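(* Let $m,K$ be positive integers and $b_1,\dots,b_{3m}$ positive integers with $K/4<b_i<K/2$ and $\sum_i b_i=mK$. Set $W=100(5m)^2K$, $a_i=b_i+W$, $L=3W+K$, $\epsilon=1/(400(5m)^2)$, $h=\lfloor 4\epsilon L\rfloor$, $H=L+h$, $\beta_0=h/H$, $\beta_i=a_i/H-1/3$ ($1\le i\le 3m$). Let $X$ be the multiset consisting of $a_1,\dots,a_{3m}$, $m$ copies of $-H$ and $m$ copies of $h$, and let $T_{\min}$ be a minimum-cost addition tree over $X$. (1) If $z$ is a node of $T_{\min}$ with $z>0$, then $z$ is of the form $\lambda H$, $(1/3+\lambda)H$, or $(2/3+\lambda)H$. (2) If $z$ is an internal node of $T_{\min}$ with $z<0$, then $z$ is of the form $\lambda H$, $(-1/3+\lambda)H$, or $(-2/3+\lambda)H$.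
   Context: An addition tree over a multiset $X$ is a full binary tree whose leaves are labeled by the elements of $X$ (each used once), each internal node having value equal to the sum of its children's values; its cost is the sum of the absolute values of its internal nodes, and $T_{\min}$ minimizes the cost. Nodes are identified with their values. A "$\lambda$" denotes a sum of at most $5m$ numbers each of the form $\pm\beta_i$ with $0\le i\le 3m$ (different occurrences of $\lambda$ may denote different such sums). Every node value can be written as $(N/3+\lambda)H$ with $N$ an integer; since $|\lambda|\le 1/(500m)$, $N$ and the value of $\lambda$ are uniquely determined. *)

theory Defs
  imports Complex_Main "HOL-Library.Multiset"
begin

datatype atree = Leaf real | Node atree atree

fun aval :: "atree \<Rightarrow> real" where
  "aval (Leaf x) = x"
| "aval (Node l r) = aval l + aval r"

fun leaves :: "atree \<Rightarrow> real multiset" where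
  "leaves (Leaf x) = {#x#}"
| "leaves (Node l r) = leaves l + leaves r"

fun acost :: "atree \<Rightarrow> real" where
  "acost (Leaf x) = 0"
| "acost (Node l r) = \<bar>aval l + aval r\<bar> + acost l + acost r"

fun subtrees :: "atree \<Rightarrow> atree set" where
  "subtrees (Leaf x) = {Leaf x}"
| "subtrees (Node l r) = insert (Node l r) (subtrees l \<union> subtrees r)"

fun is_internal :: "atree \<Rightarrow> bool" where
  "is_internal (Leaf x) = False"
| "is_internal (Node l r) = True"

definition addition_tree :: "real multiset \<Rightarrow> atree \<Rightarrow> bool" where
  "addition_tree X T \<longleftrightarrow> leaves T = X"

definition min_addition_tree :: "real multiset \<Rightarrow> atree \<Rightarrow> bool" where
  "min_addition_tree X T \<longleftrightarrow> addition_tree X T \<and>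
     (\<forall>T'. addition_tree X T' \<longrightarrow> acost T \<le> acost T')"

text \<open>A "lambda": a sum of at most 5m numbers, each of the form +beta_i or -beta_i
with 0 <= i <= 3m.  A signed term is encoded as (sign, index).\<close>
definition is_lambda :: "nat \<Rightarrow> (nat \<Rightarrow> real) \<Rightarrow> real \<Rightarrow> bool" where
  "is_lambda m \<beta> x \<longleftrightarrow> (\<exists>ss :: (bool \<times> nat) list.
      length ss \<le> 5 * m \<and> (\<forall>(s, i) \<in> set ss. i \<le> 3 * m) \<and>
      x = sum_list (map (\<lambda>(s, i). if s then \<beta> i else - \<beta> i) ss))"

definition of_form :: "nat \<Rightarrow> (nat \<Rightarrow> real) \<Rightarrow> real \<Rightarrow> real \<Rightarrow> real \<Rightarrow> bool" where
  "of_form m \<beta> H c z \<longleftrightarrow> (\<exists>l. is_lambda m \<beta> l \<and> z = (c + l) * H)"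

end

theory Submission
  imports Defs
begin

fun Nc :: "(real \<Rightarrow> int) \<Rightarrow> atree \<Rightarrow> int" where
  "Nc f (Leaf x) = f x"
| "Nc f (Node l r) = Nc f l + Nc f r"

lemma subtrees_self: "T \<in> subtrees T"
  by (cases T) auto

lemma subtrees_trans: "S \<in> subtrees T \<Longrightarrow> subtrees S \<subseteq> subtrees T"
  by (induction T) auto

lemma subtrees_child: "Node l r \<in> subtrees T \<Longrightarrow> l \<in> subtrees T \<and> r \<in> subtrees T"
  using subtrees_trans subtrees_self by fastforce

lemma finite_subtrees: "finite (subtrees T)"
  by (induction T) auto

lemma subtrees_parent: "S \<in> subtrees T \<Longrightarrow> S \<noteq> T \<Longrightarrow> \<exists>y. Node S y \<in> subtrees T \<or> Node y S \<in> subtrees T"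
proof (induction T)
  case (Leaf x) then show ?case by simp
next
  case (Node l r)
  then have "S \<in> subtrees l \<or> S \<in> subtrees r" by auto
  then show ?case
  proof
    assume h: "S \<in> subtrees l"
    show ?case
    proof (cases "S = l")
      case True then show ?thesis by auto
    next
      case False then show ?thesis using Node.IH(1) h by auto
    qed
  next
    assume h: "S \<in> subtrees r"
    show ?case
    proof (cases "S = r")
      case True then show ?thesis by auto
    next
      case False then show ?thesis using Node.IH(2) h by auto
    qed
  qed
qed

lemma leaves_sub: "S \<in> subtrees T \<Longrightarrow> leaves S \<subseteq># leaves T"
proof (induction T)
  case (Leaf x) then show ?case by simp
next
  case (Node l r)
  then show ?case
    by (auto intro: subset_mset.order_trans[OF _ mset_subset_eq_add_left]
                    subset_mset.order_trans[OF _ mset_subset_eq_add_right])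
qed

lemma aval_sum: "aval T = sum_mset (leaves T)"
  by (induction T) auto

lemma replace:
  assumes "S \<in> subtrees T" "leaves S' = leaves S"
  shows "\<exists>T'. leaves T' = leaves T \<and> acost T' = acost T + (acost S' - acost S)"
  using assms
proof (induction T)
  case (Leaf x) then show ?case by (rule_tac x=S' in exI) auto
next
  case (Node l r)
  show ?case
  proof (cases "S = Node l r")
    case True then show ?thesis using Node.prems by (rule_tac x=S' in exI) auto
  next
    case False
    then have "S \<in> subtrees l \<or> S \<in> subtrees r" using Node.prems by auto
    then show ?thesis
    proof
      assume "S \<in> subtrees l"
      then obtain l' where "leaves l' = leaves l" "acost l' = acost l + (acost S' - acost S)"
        using Node.IH(1) Node.prems(2) by blast
      moreover have "aval l' = aval l" using calculation(1) by (simp add: aval_sum)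
      ultimately show ?thesis by (rule_tac x="Node l' r" in exI) auto
    next
      assume "S \<in> subtrees r"
      then obtain r' where "leaves r' = leaves r" "acost r' = acost r + (acost S' - acost S)"
        using Node.IH(2) Node.prems(2) by blast
      moreover have "aval r' = aval r" using calculation(1) by (simp add: aval_sum)
      ultimately show ?thesis by (rule_tac x="Node l r'" in exI) auto
    qed
  qed
qed

lemma rc:
  assumes "min_addition_tree X T"
    and "Node (Node A B) y \<in> subtrees T \<or> Node y (Node A B) \<in> subtrees T"
  shows "\<bar>aval A + aval B\<bar> \<le> \<bar>aval A + aval y\<bar> \<and> \<bar>aval A + aval B\<bar> \<le> \<bar>aval B + aval y\<bar>"
proof -
  have lt: "leaves T = X" and mn: "\<And>T'. leaves T' = X \<Longrightarrow> acost T \<le> acost T'"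
    using assms(1) by (auto simp: min_addition_tree_def addition_tree_def)
  obtain S where S: "S \<in> subtrees T" and Sv: "S = Node (Node A B) y \<or> S = Node y (Node A B)"
    using assms(2) by blast
  have cS: "acost S = \<bar>aval A + aval B + aval y\<bar> + \<bar>aval A + aval B\<bar> + acost A + acost B + acost y"
    using Sv by (auto simp: algebra_simps)
  have lS: "leaves S = leaves A + leaves B + leaves y" using Sv by (auto simp: ac_simps)
  let ?S1 = "Node (Node A y) B"
  let ?S2 = "Node (Node B y) A"
  have l1: "leaves ?S1 = leaves S" using lS by (simp add: ac_simps)
  have l2: "leaves ?S2 = leaves S" using lS by (simp add: ac_simps)
  obtain T1 where "leaves T1 = leaves T" "acost T1 = acost T + (acost ?S1 - acost S)"
    using replace[OF S l1] by blast
  then have "acost T \<le> acost T + (acost ?S1 - acost S)" using mn lt by metis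
  then have 1: "acost S \<le> acost ?S1" by simp
  obtain T2 where "leaves T2 = leaves T" "acost T2 = acost T + (acost ?S2 - acost S)"
    using replace[OF S l2] by blast
  then have "acost T \<le> acost T + (acost ?S2 - acost S)" using mn lt by metis
  then have 2: "acost S \<le> acost ?S2" by simp
  show ?thesis using 1 2 cS by (auto simp: algebra_simps)
qed


lemma int_of_real_lt: "real_of_int a < real_of_int b + 1 \<Longrightarrow> a \<le> b"
  by (metis of_int_1 of_int_add of_int_less_iff zle_add1_eq_le)

lemma key:
  fixes T :: atree and f :: "real \<Rightarrow> int" and H :: real
  assumes H: "H > 0"
  and err: "\<forall>S\<in>subtrees T. \<bar>3 * aval S / H - real_of_int (Nc f S)\<bar> \<le> 1/100"
  and leafN: "\<And>x. f x \<le> 1 \<and> f x \<ge> -3"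
  and root: "Nc f T = 0"
  and rcond: "\<And>A B y. Node (Node A B) y \<in> subtrees T \<or> Node y (Node A B) \<in> subtrees T \<Longrightarrow>
      \<bar>aval A + aval B\<bar> \<le> \<bar>aval A + aval y\<bar> \<and> \<bar>aval A + aval B\<bar> \<le> \<bar>aval B + aval y\<bar>"
  shows "\<forall>S\<in>subtrees T. Nc f S \<le> 2 \<and> (is_internal S \<longrightarrow> Nc f S \<ge> -2)"
proof -
  define u where "u S = 3 * aval S / H" for S
  have e: "\<And>S. S \<in> subtrees T \<Longrightarrow> u S \<le> Nc f S + 1/100 \<and> u S \<ge> Nc f S - 1/100"
  proof -
    fix S assume "S \<in> subtrees T"
    then have "\<bar>3 * aval S / H - real_of_int (Nc f S)\<bar> \<le> 1/100" using err by blast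
    then show "u S \<le> Nc f S + 1/100 \<and> u S \<ge> Nc f S - 1/100" unfolding u_def by linarith
  qed
  have rcu: "\<bar>u A + u B\<bar> \<le> \<bar>u A + u y\<bar> \<and> \<bar>u A + u B\<bar> \<le> \<bar>u B + u y\<bar>"
    if "Node (Node A B) y \<in> subtrees T \<or> Node y (Node A B) \<in> subtrees T" for A B y
  proof -
    have c: "\<And>p q. \<bar>3 * p / H + 3 * q / H\<bar> = (3 / H) * \<bar>p + q\<bar>"
    proof -
      fix p q
      have "3 * p / H + 3 * q / H = (3 / H) * (p + q)" by (simp add: add_divide_distrib algebra_simps)
      moreover have "\<bar>(3 / H) * (p + q)\<bar> = (3 / H) * \<bar>p + q\<bar>" using H by (simp only: abs_mult) simp
      ultimately show "\<bar>3 * p / H + 3 * q / H\<bar> = (3 / H) * \<bar>p + q\<bar>" by simp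
    qed
    have "(3/H) * \<bar>aval A + aval B\<bar> \<le> (3/H) * \<bar>aval A + aval y\<bar>"
         "(3/H) * \<bar>aval A + aval B\<bar> \<le> (3/H) * \<bar>aval B + aval y\<bar>"
      using rcond[OF that] H by (auto intro!: mult_left_mono divide_right_mono)
    then show ?thesis unfolding u_def c by simp
  qed
  have fin: "finite (subtrees T)" by (rule finite_subtrees)
  have leafNc: "\<And>x. Nc f (Leaf x) \<le> 1 \<and> Nc f (Leaf x) \<ge> -3" using leafN by simp
  define I where "I = {S \<in> subtrees T. is_internal S} \<union> {T}"
  have finI: "finite I" using fin unfolding I_def by (auto intro: finite_subset)
  define M where "M = Max (Nc f ` subtrees T)"
  define mn where "mn = Min (Nc f ` I)"
  have M_ge: "\<And>S. S \<in> subtrees T \<Longrightarrow> Nc f S \<le> M" unfolding M_def using fin by simp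
  have mn_le: "\<And>S. S \<in> I \<Longrightarrow> mn \<le> Nc f S" unfolding mn_def using finI by simp
  have TI: "T \<in> I" unfolding I_def by simp
  have M_att: "\<exists>S\<in>subtrees T. Nc f S = M"
    unfolding M_def using fin subtrees_self[of T]
    by (metis (mono_tags, lifting) Max_in empty_iff finite_imageI image_iff image_is_empty)
  have mn_att: "\<exists>S\<in>I. Nc f S = mn"
    unfolding mn_def using finI TI
    by (metis (mono_tags, lifting) Min_in empty_iff finite_imageI image_iff image_is_empty)
  have Mnn: "M \<ge> 0" using M_ge[OF subtrees_self] root by simp
  have mnn: "mn \<le> 0" using mn_le[OF TI] root by simp

  have maxside: "mn \<le> - M - 1" if M3: "M \<ge> 3"
  proof -
    obtain z0 where "z0 \<in> subtrees T \<and> Nc f z0 = M" using M_att by blast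
    then obtain z where z: "z \<in> subtrees T \<and> Nc f z = M"
      and zmin: "\<And>w. w \<in> subtrees T \<and> Nc f w = M \<Longrightarrow> size z \<le> size w"
      using ex_has_least_nat[of "\<lambda>S. S \<in> subtrees T \<and> Nc f S = M" z0 size] by blast
    have "z \<noteq> T" using z root M3 by auto
    then obtain y where par: "Node z y \<in> subtrees T \<or> Node y z \<in> subtrees T"
      using subtrees_parent z by blast
    obtain A B where zAB: "z = Node A B"
    proof (cases z)
      case (Leaf x) then have False using z leafNc[of x] M3 by simp
      then show ?thesis ..
    next
      case (Node l r) then show ?thesis using that by blast
    qed
    have A: "A \<in> subtrees T" and B: "B \<in> subtrees T" using z zAB subtrees_child by blast+
    have y: "y \<in> subtrees T" using par subtrees_child by blast
    have "Nc f A \<noteq> M" using zmin[of A] A zAB by fastforce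
    then have NA: "Nc f A \<le> M - 1" using M_ge[OF A] by simp
    have "Nc f B \<noteq> M" using zmin[of B] B zAB by fastforce
    then have NB: "Nc f B \<le> M - 1" using M_ge[OF B] by simp
    have NAB: "Nc f A + Nc f B = M" using z zAB by simp
    have "Nc f z + Nc f y \<le> M" using par M_ge[of "Node z y"] M_ge[of "Node y z"] by auto
    then have Ny: "Nc f y \<le> 0" using z by simp
    have r: "\<bar>u A + u B\<bar> \<le> \<bar>u A + u y\<bar>" using rcu[of A B y] par zAB by blast
    have eA: "u A \<ge> Nc f A - 1/100" and eB: "u B \<ge> Nc f B - 1/100" and ey: "u y \<le> Nc f y + 1/100"
      using e A B y by auto
    have R: "real_of_int (Nc f A) \<ge> 1" "real_of_int (Nc f B) \<ge> 1" "real_of_int (Nc f y) \<le> 0"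
      "real_of_int (Nc f A) + real_of_int (Nc f B) = real_of_int M"
      using NA NB NAB Ny by (simp_all flip: of_int_add)
    then have "u y \<le> -2 * u A - u B" using r eA eB ey by (auto simp: abs_if split: if_splits)
    then have "real_of_int (Nc f y) < real_of_int (-M - 1) + 1"
      using e[OF y] eA eB R by simp
    then have Nyy: "Nc f y \<le> -M - 1" by (rule int_of_real_lt)
    have "is_internal y"
    proof (cases y)
      case (Leaf x) then show ?thesis using Nyy M3 leafNc[of x] by simp
    next
      case (Node l r) then show ?thesis by simp
    qed
    then have "y \<in> I" using y unfolding I_def by simp
    then show ?thesis using mn_le Nyy by force
  qed

  have minside: "M \<ge> - mn \<and> (mn \<le> -4 \<longrightarrow> M \<ge> - mn + 1)" if m3: "mn \<le> -3"
  proof -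
    obtain z0 where z0: "z0 \<in> I \<and> Nc f z0 = mn" using mn_att by blast
    have "z0 \<noteq> T" using z0 root m3 by auto
    then have "z0 \<in> subtrees T \<and> is_internal z0 \<and> Nc f z0 = mn" using z0 unfolding I_def by auto
    then obtain z where z: "z \<in> subtrees T \<and> is_internal z \<and> Nc f z = mn"
      and zmin: "\<And>w. w \<in> subtrees T \<and> is_internal w \<and> Nc f w = mn \<Longrightarrow> size z \<le> size w"
      using ex_has_least_nat[of "\<lambda>S. S \<in> subtrees T \<and> is_internal S \<and> Nc f S = mn" z0 size] by blast
    have "z \<noteq> T" using z root m3 by auto
    then obtain y where par: "Node z y \<in> subtrees T \<or> Node y z \<in> subtrees T"
      using subtrees_parent z by blast
    obtain A B where zAB: "z = Node A B"
    proof (cases z)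
      case (Leaf x) then have False using z by simp
      then show ?thesis ..
    next
      case (Node l r) then show ?thesis using that by blast
    qed
    have A: "A \<in> subtrees T" and B: "B \<in> subtrees T" using z zAB subtrees_child by blast+
    have y: "y \<in> subtrees T" using par subtrees_child by blast
    have ch: "Nc f C \<ge> mn + 1 \<or> (\<not> is_internal C \<and> Nc f C = -3)" if C: "C \<in> subtrees T" "size C < size z" for C
    proof (cases "is_internal C")
      case True
      then have "C \<in> I" using C unfolding I_def by simp
      then have "Nc f C \<ge> mn" using mn_le by simp
      moreover have "Nc f C \<noteq> mn" using zmin[of C] C True by fastforce
      ultimately show ?thesis by simp
    next
      case False
      then obtain x where "C = Leaf x" by (cases C) auto
      then show ?thesis using leafNc[of x] m3 by force
    qed
    have chA: "Nc f A \<ge> mn + 1 \<or> Nc f A = -3" using ch[OF A] zAB by force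
    have chB: "Nc f B \<ge> mn + 1 \<or> Nc f B = -3" using ch[OF B] zAB by force
    have NAB: "Nc f A + Nc f B = mn" using z zAB by simp
    have "Node z y \<in> I \<or> Node y z \<in> I" using par unfolding I_def by auto
    then have "Nc f (Node z y) \<ge> mn \<or> Nc f (Node y z) \<ge> mn" using mn_le by blast
    then have Ny: "Nc f y \<ge> 0" using z by auto
    have r1: "\<bar>u A + u B\<bar> \<le> \<bar>u A + u y\<bar>" and r2: "\<bar>u A + u B\<bar> \<le> \<bar>u B + u y\<bar>"
      using rcu[of A B y] par zAB by blast+
    have eA: "u A \<ge> Nc f A - 1/100" "u A \<le> Nc f A + 1/100"
      and eB: "u B \<ge> Nc f B - 1/100" "u B \<le> Nc f B + 1/100"
      and ey: "u y \<le> Nc f y + 1/100" "u y \<ge> Nc f y - 1/100"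
      using e A B y by auto
    have "Nc f y \<ge> - mn \<and> (mn \<le> -4 \<longrightarrow> Nc f y \<ge> - mn + 1)"
    proof (cases "Nc f A \<le> -1 \<and> Nc f B \<le> -1")
      case True
      then have R1: "real_of_int (Nc f A) \<le> -1" "real_of_int (Nc f B) \<le> -1" "real_of_int (Nc f y) \<ge> 0"
        using Ny by simp_all
      have R2: "real_of_int (Nc f A) + real_of_int (Nc f B) = real_of_int mn"
        using NAB by (simp flip: of_int_add)
      have "u y \<ge> - u A - 2 * u B" using R1 r2 eA eB ey by (auto simp: abs_if split: if_splits)
      then have "real_of_int (- mn + 1) < real_of_int (Nc f y) + 1"
        using eA eB ey R1 R2 by simp
      then have "- mn + 1 \<le> Nc f y" by (rule int_of_real_lt)
      then show ?thesis by simp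
    next
      case False
      then have cc: "(Nc f A = -3 \<and> Nc f B = 0 \<and> mn = -3) \<or> (Nc f B = -3 \<and> Nc f A = 0 \<and> mn = -3)"
        using chA chB NAB m3 by auto
      then show ?thesis
      proof
        assume h: "Nc f A = -3 \<and> Nc f B = 0 \<and> mn = -3"
        then have "real_of_int (Nc f A) = -3" "real_of_int (Nc f B) = 0" "real_of_int (Nc f y) \<ge> 0"
          using Ny by simp_all
        then have "u y \<ge> 297/100" using r2 eA eB ey by (auto simp: abs_if split: if_splits)
        then have "real_of_int 3 < real_of_int (Nc f y) + 1" using ey by simp
        then have "3 \<le> Nc f y" by (rule int_of_real_lt)
        then show ?thesis using h by simp
      next
        assume h: "Nc f B = -3 \<and> Nc f A = 0 \<and> mn = -3"
        then have "real_of_int (Nc f B) = -3" "real_of_int (Nc f A) = 0" "real_of_int (Nc f y) \<ge> 0"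
          using Ny by simp_all
        then have "u y \<ge> 297/100" using r1 eA eB ey by (auto simp: abs_if split: if_splits)
        then have "real_of_int 3 < real_of_int (Nc f y) + 1" using ey by simp
        then have "3 \<le> Nc f y" by (rule int_of_real_lt)
        then show ?thesis using h by simp
      qed
    qed
    then show ?thesis using M_ge[OF y] by auto
  qed
  have M2: "M \<le> 2"
  proof (rule ccontr)
    assume a: "\<not> M \<le> 2"
    then have b: "mn \<le> -M - 1" using maxside by simp
    then have "- mn + 1 \<le> M" using minside a by simp
    then show False using b by simp
  qed
  have mn2: "mn \<ge> -2"
  proof (rule ccontr)
    assume a: "\<not> mn \<ge> -2"
    then have "- mn \<le> M" using minside by simp
    then show False using a M2 by simp
  qed
  show ?thesis
  proof
    fix S assume S: "S \<in> subtrees T"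
    show "Nc f S \<le> 2 \<and> (is_internal S \<longrightarrow> Nc f S \<ge> -2)"
      using M_ge[OF S] M2 mn_le[of S] mn2 S unfolding I_def by force
  qed
qed


lemma Nc_sum: "Nc f S = sum_mset (image_mset f (leaves S))"
  by (induction S) auto

lemma g_sum: "(\<Sum>x\<in>#leaves S. x / H - real_of_int (f x) / 3) = aval S / H - real_of_int (Nc f S) / 3"
  by (induction S) (auto simp: add_divide_distrib algebra_simps)

lemma abs_sum_mset: "\<bar>sum_mset (image_mset g Y)\<bar> \<le> sum_mset (image_mset (\<lambda>x. \<bar>g x\<bar>) Y)" for g :: "real \<Rightarrow> real"
  by (induction Y) (auto intro: order_trans[OF abs_triangle_ineq])

lemma sum_mset_nonneg': "(\<And>x. \<phi> x \<ge> 0) \<Longrightarrow> sum_mset (image_mset \<phi> Y) \<ge> (0::real)"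
  by (induction Y) (auto intro: add_nonneg_nonneg)

lemma sum_mset_mono_sub:
  fixes \<phi> :: "real \<Rightarrow> real"
  assumes "Y \<subseteq># Z" "\<And>x. \<phi> x \<ge> 0"
  shows "sum_mset (image_mset \<phi> Y) \<le> sum_mset (image_mset \<phi> Z)"
proof -
  have "Z = Y + (Z - Y)" using assms(1) by simp
  then have "sum_mset (image_mset \<phi> Z) = sum_mset (image_mset \<phi> Y) + sum_mset (image_mset \<phi> (Z - Y))"
    by (metis image_mset_union sum_mset.union)
  moreover have "sum_mset (image_mset \<phi> (Z - Y)) \<ge> 0" using assms(2) by (rule sum_mset_nonneg')
  ultimately show ?thesis by simp
qed

lemma sum_mset_bound:
  fixes \<phi> :: "real \<Rightarrow> real"
  shows "(\<forall>x\<in>#Y. \<phi> x \<le> c) \<Longrightarrow> sum_mset (image_mset \<phi> Y) \<le> real (size Y) * c"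
  by (induction Y) (auto simp: algebra_simps)

lemma lambda_list:
  fixes g :: "real \<Rightarrow> real" and \<beta> :: "nat \<Rightarrow> real"
  shows "(\<forall>x\<in>#Y. g x = 0 \<or> (\<exists>i\<le>n. \<beta> i = g x)) \<Longrightarrow> \<exists>ss :: (bool \<times> nat) list. length ss \<le> size Y \<and>
     (\<forall>(s, i) \<in> set ss. i \<le> n) \<and>
     sum_mset (image_mset g Y) = sum_list (map (\<lambda>(s, i). if s then \<beta> i else - \<beta> i) ss)"
proof (induction Y)
  case empty
  then show ?case by (rule_tac x="[]" in exI) simp
next
  case (add x Y)
  then obtain ss where ss: "length ss \<le> size Y" "\<forall>(s, i) \<in> set ss. i \<le> n"
     "sum_mset (image_mset g Y) = sum_list (map (\<lambda>(s, i). if s then \<beta> i else - \<beta> i) ss)" by auto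
  have "g x = 0 \<or> (\<exists>i\<le>n. \<beta> i = g x)" using add.prems by simp
  then show ?case
  proof
    assume "g x = 0"
    then show ?thesis using ss by (rule_tac x=ss in exI) auto
  next
    assume "\<exists>i\<le>n. \<beta> i = g x"
    then obtain i where "i \<le> n" "\<beta> i = g x" by blast
    then show ?thesis using ss by (rule_tac x="(True, i) # ss" in exI) auto
  qed
qed


theorem lemma2p7:
  fixes m K :: nat and b :: "nat \<Rightarrow> nat"
    and W L \<epsilon> H :: real and h :: int
    and a \<beta> :: "nat \<Rightarrow> real"
    and X :: "real multiset" and T :: atree
  assumes "m > 0" and "K > 0"
    and "\<And>i. i \<in> {1..3*m} \<Longrightarrow> b i > 0"
    and "\<And>i. i \<in> {1..3*m} \<Longrightarrow> real K / 4 < real (b i) \<and> real (b i) < real K / 2"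
    and "(\<Sum>i=1..3*m. b i) = m * K"
    and "W = 100 * (5 * real m)^2 * real K"
    and "\<And>i. a i = real (b i) + W"
    and "L = 3 * W + real K"
    and "\<epsilon> = 1 / (400 * (5 * real m)^2)"
    and "h = \<lfloor>4 * \<epsilon> * L\<rfloor>"
    and "H = L + real_of_int h"
    and "\<beta> 0 = real_of_int h / H"
    and "\<And>i. i \<in> {1..3*m} \<Longrightarrow> \<beta> i = a i / H - 1/3"
    and "X = mset (map a [1..<3*m+1]) + replicate_mset m (- H) + replicate_mset m (real_of_int h)"
    and "min_addition_tree X T"
  shows "(\<forall>S \<in> subtrees T. aval S > 0 \<longrightarrow>
            of_form m \<beta> H 0 (aval S) \<or> of_form m \<beta> H (1/3) (aval S) \<or> of_form m \<beta> H (2/3) (aval S))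
       \<and> (\<forall>S \<in> subtrees T. is_internal S \<and> aval S < 0 \<longrightarrow>
            of_form m \<beta> H 0 (aval S) \<or> of_form m \<beta> H (-1/3) (aval S) \<or> of_form m \<beta> H (-2/3) (aval S))"
proof -
  note mpos = assms(1) and Kpos = assms(2) and bb = assms(4) and Wd = assms(6) and ad = assms(7)
    and Ld = assms(8) and ed = assms(9) and hd = assms(10) and Hd = assms(11) and b0 = assms(12)
    and bi = assms(13) and Xd = assms(14) and mint = assms(15)
  define mm where "mm = real m"
  define k where "k = real K"
  have mm1: "mm \<ge> 1" using mpos unfolding mm_def by simp
  have k1: "k \<ge> 1" using Kpos unfolding k_def by simp
  have mm2: "mm^2 \<ge> 1" using mm1 by (simp add: one_le_power)
  have W2: "W = 2500 * mm^2 * k" using Wd unfolding mm_def k_def by (simp add: power_mult_distrib)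
  have L2: "L = 7500 * mm^2 * k + k" using Ld W2 unfolding k_def by simp
  have Lpos: "L > 0" using L2 k1 mm2 by (smt (verit) mult_nonneg_nonneg)
  have e4: "4 * \<epsilon> * L = L / (2500 * mm^2)" using ed unfolding mm_def by (simp add: power_mult_distrib)
  have hnn: "h \<ge> 0" using hd e4 Lpos mm2 by simp
  have hle: "real_of_int h \<le> L / (2500 * mm^2)" using hd e4 by simp
  have "real_of_int h * (2500 * mm^2) \<le> L" using hle mm2 by (subst (asm) pos_le_divide_eq) auto
  then have hle2: "real_of_int h * mm^2 \<le> L / 2500" by simp
  have hr0: "real_of_int h \<ge> 0" using hnn by simp
  have hm: "real_of_int h * mm \<le> real_of_int h * mm^2"
    using hr0 mm1 by (intro mult_left_mono) (auto simp: power2_eq_square intro: order_trans[of _ "mm*1"])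
  have "real_of_int h * 1 \<le> real_of_int h * mm^2" using mm2 hr0 by (rule mult_left_mono)
  then have hL: "real_of_int h \<le> L / 2500" using hle2 by simp
  have Hpos: "H > 0" using Hd Lpos hr0 by simp
  have "1 * k \<le> mm^2 * k" using mm2 k1 by (intro mult_right_mono) auto
  moreover have "W = 2500 * (mm^2 * k)" "L = 7500 * (mm^2 * k) + k" using W2 L2 by simp_all
  ultimately have hW: "real_of_int h < W" using hL k1 by linarith
  have aW: "\<And>i. a i \<ge> W" using ad by simp
  have "k * mm^2 > 0" using k1 mm2 by (intro mult_pos_pos) auto
  then have Wpos: "W > 0" using W2 by simp
  define f where "f x = (if x = - H then (-3::int) else if x = real_of_int h then 0 else 1)" for x
  define g where "g x = x / H - real_of_int (f x) / 3" for x
  have fa: "f (a i) = 1" for i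
  proof -
    have "a i \<noteq> - H" "a i \<noteq> real_of_int h" using aW[of i] hW Wpos Hpos by linarith+
    then show ?thesis unfolding f_def by simp
  qed
  have fH: "f (- H) = -3" unfolding f_def by simp
  have fh: "f (real_of_int h) = 0" unfolding f_def using hr0 Hpos by auto
  have gH: "g (- H) = 0" unfolding g_def fH using Hpos by simp
  have gh: "g (real_of_int h) = real_of_int h / H" unfolding g_def fh by simp
  have ga: "\<And>i. g (a i) = a i / H - 1/3" unfolding g_def fa by simp
  have Xmem: "x = - H \<or> x = real_of_int h \<or> (\<exists>i\<in>{1..3*m}. x = a i)" if "x \<in># X" for x
  proof -
    have "x \<in> set (map a [1..<3*m+1]) \<or> x \<in># replicate_mset m (-H) \<or> x \<in># replicate_mset m (real_of_int h)"
      using that Xd by auto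
    then show ?thesis by (auto simp: in_replicate_mset split: if_splits)
  qed
  have lT: "leaves T = X" using mint unfolding min_addition_tree_def addition_tree_def by simp
  have kh0: "k + real_of_int h \<ge> 0" using k1 hr0 by simp
  have gb: "\<bar>g x\<bar> \<le> (k + real_of_int h) / H" if xX: "x \<in># X" for x
  proof -
    consider "x = - H" | "x = real_of_int h" | i where "i \<in> {1..3*m}" "x = a i" using Xmem[OF xX] by blast
    then show ?thesis
    proof cases
      case 1 then show ?thesis using gH kh0 Hpos by simp
    next
      case 2 then show ?thesis using gh hr0 Hpos k1 by (simp add: divide_right_mono)
    next
      case 3
      have bi0: "real (b i) \<ge> 0" "real (b i) < k / 2" using bb[OF 3(1)] unfolding k_def by auto
      have eq: "a i / H - 1/3 = (3 * a i - H) / (3 * H)" using Hpos by (simp add: field_simps)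
      have n1: "3 * a i - H \<le> k + real_of_int h" and n2: "- (k + real_of_int h) \<le> 3 * a i - H"
        using bi0 ad[of i] Hd Ld hr0 unfolding k_def by linarith+
      have H3: "3 * H > 0" using Hpos by simp
      have q: "(k + real_of_int h) / (3 * H) \<le> (k + real_of_int h) / H"
        using kh0 Hpos by (simp add: frac_le)
      have "(3 * a i - H) / (3 * H) \<le> (k + real_of_int h) / (3 * H)"
        using n1 H3 by (simp add: divide_right_mono)
      then have e1: "a i / H - 1/3 \<le> (k + real_of_int h) / H" using eq q by linarith
      have "(- (k + real_of_int h)) / (3 * H) \<le> (3 * a i - H) / (3 * H)"
        using n2 H3 by (simp add: divide_right_mono)
      moreover have "(- (k + real_of_int h)) / (3 * H) = - ((k + real_of_int h) / (3 * H))" by (rule minus_divide_left[symmetric])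
      ultimately have e2: "- ((k + real_of_int h) / H) \<le> a i / H - 1/3" using eq q by linarith
      show ?thesis using e1 e2 3(2) ga by (simp add: abs_le_iff)
    qed
  qed
  have sizeX: "size X = 5 * m" unfolding Xd by simp
  have NT: "Nc f T = 0"
  proof -
    have sl: "sum_list (map (f \<circ> a) xs) = int (length xs)" for xs
      by (induction xs) (auto simp: fa)
    define xs where "xs = [1..<3*m+1]"
    have lx: "length xs = 3*m" by (simp add: xs_def)
    have "Nc f T = sum_mset (image_mset f X)" by (simp add: Nc_sum lT)
    also have "\<dots> = sum_list (map (f \<circ> a) xs) + int m * (-3) + int m * 0"
      unfolding Xd xs_def[symmetric] using fH fh by (simp add: sum_mset_sum_list image_mset.compositionality flip: mset_map)
    finally show ?thesis using sl[of xs] lx by simp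
  qed
  have gfun: "g = (\<lambda>x. x / H - real_of_int (f x) / 3)" by (rule ext) (simp add: g_def)
  have sX: "sum_mset (image_mset (\<lambda>x. \<bar>g x\<bar>) X) \<le> real (size X) * ((k + real_of_int h) / H)"
    using gb by (intro sum_mset_bound) auto
  have mk: "mm * k \<le> mm^2 * k" using mm1 k1 by (intro mult_right_mono) (auto simp: power2_eq_square)
  have "1500 * mm * (k + real_of_int h) = 1500 * (mm * k) + 1500 * (real_of_int h * mm)"
    by (simp add: algebra_simps)
  also have L3: "L = 7500 * (mm^2 * k) + k" using L2 by simp
  have "1500 * (mm * k) + 1500 * (real_of_int h * mm) \<le> H"
  proof -
    define p where "p = mm^2 * k"
    define q where "q = real_of_int h * mm^2"
    have "mm * k \<le> p" "real_of_int h * mm \<le> q" "q \<le> L / 2500" "L = 7500 * p + k"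
      using mk hm hle2 L3 unfolding p_def q_def by auto
    then show ?thesis using Hd hr0 k1 Lpos by linarith
  qed
  ultimately have big: "1500 * mm * (k + real_of_int h) \<le> H" by simp
  have "real (size X) * ((k + real_of_int h) / H) = (5 * mm * (k + real_of_int h)) / H"
    using sizeX unfolding mm_def by simp
  also have "\<dots> \<le> 1 / 300" using big Hpos by (simp add: pos_divide_le_eq)
  finally have sX2: "sum_mset (image_mset (\<lambda>x. \<bar>g x\<bar>) X) \<le> 1/300" using sX by linarith
  have lam: "sum_mset (image_mset g (leaves S)) = aval S / H - real_of_int (Nc f S) / 3" for S
    unfolding gfun by (rule g_sum)
  have lamb: "\<bar>sum_mset (image_mset g (leaves S))\<bar> \<le> 1/300" if "S \<in> subtrees T" for S
  proof -
    have "leaves S \<subseteq># X" using leaves_sub[OF that] lT by simp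
    then have "sum_mset (image_mset (\<lambda>x. \<bar>g x\<bar>) (leaves S)) \<le> sum_mset (image_mset (\<lambda>x. \<bar>g x\<bar>) X)"
      by (rule sum_mset_mono_sub) simp
    then show ?thesis using abs_sum_mset[of g "leaves S"] sX2 by linarith
  qed
  have err: "\<forall>S\<in>subtrees T. \<bar>3 * aval S / H - real_of_int (Nc f S)\<bar> \<le> 1/100"
  proof
    fix S assume S: "S \<in> subtrees T"
    have "3 * aval S / H - real_of_int (Nc f S) = 3 * (aval S / H - real_of_int (Nc f S) / 3)" by simp
    then have "\<bar>3 * aval S / H - real_of_int (Nc f S)\<bar> = 3 * \<bar>aval S / H - real_of_int (Nc f S) / 3\<bar>"
      by (simp only: abs_mult)
    then show "\<bar>3 * aval S / H - real_of_int (Nc f S)\<bar> \<le> 1/100" using lamb[OF S] lam[of S] by linarith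
  qed
  have leafN: "\<And>x. f x \<le> 1 \<and> f x \<ge> -3" unfolding f_def by simp
  have KEY: "\<forall>S\<in>subtrees T. Nc f S \<le> 2 \<and> (is_internal S \<longrightarrow> Nc f S \<ge> -2)"
    by (rule key[OF Hpos err leafN NT]) (rule rc[OF mint])
  have form: "of_form m \<beta> H (real_of_int (Nc f S) / 3) (aval S)" if S: "S \<in> subtrees T" for S
  proof -
    have sub: "leaves S \<subseteq># X" using leaves_sub[OF S] lT by simp
    have "\<forall>x\<in>#leaves S. g x = 0 \<or> (\<exists>i\<le>3*m. \<beta> i = g x)"
    proof
      fix x assume "x \<in># leaves S"
      then have "x \<in># X" using sub by (meson mset_subset_eqD)
      then consider "x = - H" | "x = real_of_int h" | i where "i \<in> {1..3*m}" "x = a i" using Xmem by blast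
      then show "g x = 0 \<or> (\<exists>i\<le>3*m. \<beta> i = g x)"
      proof cases
        case 1 then show ?thesis using gH by simp
      next
        case 2 then show ?thesis using gh b0 by auto
      next
        case 3 then show ?thesis using ga bi by auto
      qed
    qed
    then obtain ss :: "(bool \<times> nat) list" where ss: "length ss \<le> size (leaves S)" "\<forall>(s, i) \<in> set ss. i \<le> 3*m"
      "sum_mset (image_mset g (leaves S)) = sum_list (map (\<lambda>(s, i). if s then \<beta> i else - \<beta> i) ss)"
      using lambda_list by blast
    have "size (leaves S) \<le> size X" using sub by (rule size_mset_mono)
    then have "length ss \<le> 5 * m" using ss(1) sizeX by simp
    then have il: "is_lambda m \<beta> (sum_mset (image_mset g (leaves S)))"
      unfolding is_lambda_def using ss by blast
    have "aval S = (real_of_int (Nc f S) / 3 + sum_mset (image_mset g (leaves S))) * H"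
      using lam[of S] Hpos by (simp add: field_simps)
    then show ?thesis unfolding of_form_def using il by blast
  qed
  show ?thesis
  proof (intro conjI ballI impI)
    fix S assume S: "S \<in> subtrees T" and pos: "aval S > 0"
    have "3 * aval S / H > 0" using pos Hpos by simp
    moreover have "\<bar>3 * aval S / H - real_of_int (Nc f S)\<bar> \<le> 1/100" using err S by blast
    ultimately have "real_of_int (Nc f S) > -1" by linarith
    then have "Nc f S \<ge> 0" by simp
    then have "Nc f S = 0 \<or> Nc f S = 1 \<or> Nc f S = 2" using KEY S by force
    then show "of_form m \<beta> H 0 (aval S) \<or> of_form m \<beta> H (1/3) (aval S) \<or> of_form m \<beta> H (2/3) (aval S)"
      using form[OF S] by auto
  next
    fix S assume S: "S \<in> subtrees T" and ng: "is_internal S \<and> aval S < 0"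
    have "3 * aval S / H < 0" using ng Hpos by (simp add: divide_neg_pos)
    moreover have "\<bar>3 * aval S / H - real_of_int (Nc f S)\<bar> \<le> 1/100" using err S by blast
    ultimately have "real_of_int (Nc f S) < 1" by linarith
    then have "Nc f S \<le> 0" by simp
    then have "Nc f S = 0 \<or> Nc f S = -1 \<or> Nc f S = -2" using KEY S ng by force
    then show "of_form m \<beta> H 0 (aval S) \<or> of_form m \<beta> H (-1/3) (aval S) \<or> of_form m \<beta> H (-2/3) (aval S)"
      using form[OF S] by auto
  qed
qed

end
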